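(* Every congestion game structure $\mathcal G=(\mathcal R,c,\mathcal S)$ is equivalent to a common-OD constrained routing game over a (two-terminal) series-parallel network.
   Context: A congestion game structure $\mathcal G=(\mathcal R,c,\mathcal S)$: finite resource set $\mathcal R$ with continuous nondecreasing costs $c_r:\mathbb R_+\to\mathbb R_+$, finite commodity set $\mathcal H$, each $h$ with a nonempty finite family $\mathcal S^h\subseteq 2^{\mathcal R}$ of strategies. For demand $\mu\in\mathbb R_+^{\mathcal H}$, a feasible flow is $f=(f^h_s)$, $f^h_s\ge0$, $\sum_{s\in\mathcal S^h}f^h_s=\mu^h$; loads $x_r=\sum_h\sum_{s\in\mathcal S^h:r\in s}f^h_s$; strategy cost $c_s(f)=\sum_{r\in s}c_r(x_r)$. A constrained routing game $(G,c,\mathcal P)$ consists of a directed multigraph $G=(V,E)$, edge costs $c_e$ (continuous nondecreasing), and for each commodity $h$ of a finite set $\mathcal H$ a nonempty set $\mathcal P^h$ of paths from an origin $O^h$ to a destination $D^h$; it is the congestion game with resources $E$ and strategy sets $\mathcal S^h=\mathcal P^h$ (paths viewed as edge sets). It is common-OD if all commodities share the same origin and destination. A two-terminal series-parallel network is a directed multigraph obtained from single edges by finitely many series compositions (identifying the destination of one with the origin of the other) and parallel compositions (identifying origins and identifying destinations). Two congestion games are equivalent if there are bijections $h\leftrightarrow\tilde h$ between their commodities and $s\leftrightarrow\tilde s$ between their strategies (respecting commodities) such that for every demand $\mu$ and every feasible flow $f$ of the first, the flow $\tilde f$ with $\tilde f_{\tilde s}=f_s$ is feasible for the second and $\tilde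 c_{\tilde s}(\tilde f)=c_s(f)$ for all strategies. *)

theory Defs
  imports "HOL-Analysis.Analysis"
begin

definition admissible_cost :: "(real \<Rightarrow> real) \<Rightarrow> bool" where
  "admissible_cost g \<longleftrightarrow> continuous_on {0..} g \<and> mono_on {0..} g \<and> (\<forall>x\<ge>0. g x \<ge> 0)"

definition congestion_game_structure ::
  "'r set \<Rightarrow> ('r \<Rightarrow> real \<Rightarrow> real) \<Rightarrow> 'h set \<Rightarrow> ('h \<Rightarrow> 'r set set) \<Rightarrow> bool" where
  "congestion_game_structure R c H S \<longleftrightarrow>
     finite R \<and> finite H \<and> (\<forall>r\<in>R. admissible_cost (c r)) \<and>
     (\<forall>h\<in>H. S h \<noteq> {} \<and> finite (S h) \<and> (\<forall>s\<in>S h. s \<subseteq> R))"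

text \<open>Generic congestion games: strategies of type 's, each having a resource set res s
  (res = id for congestion game structures, res = set for paths as edge sets).\<close>
definition feasible_flow :: "'h set \<Rightarrow> ('h \<Rightarrow> 's set) \<Rightarrow> ('h \<Rightarrow> real) \<Rightarrow> ('h \<Rightarrow> 's \<Rightarrow> real) \<Rightarrow> bool" where
  "feasible_flow H S \<mu> f \<longleftrightarrow> (\<forall>h\<in>H. (\<forall>s\<in>S h. f h s \<ge> 0) \<and> sum (f h) (S h) = \<mu> h)"

definition load :: "'h set \<Rightarrow> ('h \<Rightarrow> 's set) \<Rightarrow> ('s \<Rightarrow> 'r set) \<Rightarrow> ('h \<Rightarrow> 's \<Rightarrow> real) \<Rightarrow> 'r \<Rightarrow> real" where
  "load H S res f r = (\<Sum>h\<in>H. \<Sum>s\<in>{s\<in>S h. r \<in> res s}. f h s)"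

definition strategy_cost ::
  "'h set \<Rightarrow> ('h \<Rightarrow> 's set) \<Rightarrow> ('s \<Rightarrow> 'r set) \<Rightarrow> ('r \<Rightarrow> real \<Rightarrow> real) \<Rightarrow> ('h \<Rightarrow> 's \<Rightarrow> real) \<Rightarrow> 's \<Rightarrow> real" where
  "strategy_cost H S res c f s = (\<Sum>r\<in>res s. c r (load H S res f r))"

definition equivalent_games ::
  "'h1 set \<Rightarrow> ('h1 \<Rightarrow> 's1 set) \<Rightarrow> ('s1 \<Rightarrow> 'r1 set) \<Rightarrow> ('r1 \<Rightarrow> real \<Rightarrow> real) \<Rightarrow>
   'h2 set \<Rightarrow> ('h2 \<Rightarrow> 's2 set) \<Rightarrow> ('s2 \<Rightarrow> 'r2 set) \<Rightarrow> ('r2 \<Rightarrow> real \<Rightarrow> real) \<Rightarrow> bool" where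
  "equivalent_games H1 S1 res1 c1 H2 S2 res2 c2 \<longleftrightarrow>
    (\<exists>\<tau> \<sigma>. bij_betw \<tau> H1 H2 \<and> (\<forall>h\<in>H1. bij_betw (\<sigma> h) (S1 h) (S2 (\<tau> h))) \<and>
      (\<forall>\<mu> f g. (\<forall>h\<in>H1. \<mu> h \<ge> 0) \<longrightarrow> feasible_flow H1 S1 \<mu> f \<longrightarrow>
         (\<forall>h\<in>H1. \<forall>s\<in>S1 h. g (\<tau> h) (\<sigma> h s) = f h s) \<longrightarrow>
         feasible_flow H2 S2 (\<lambda>h'. \<mu> (inv_into H1 \<tau> h')) g \<and>
         (\<forall>h\<in>H1. \<forall>s\<in>S1 h. strategy_cost H2 S2 res2 c2 g (\<sigma> h s) = strategy_cost H1 S1 res1 c1 f s)))"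

definition verts :: "'e set \<Rightarrow> ('e \<Rightarrow> 'v) \<Rightarrow> ('e \<Rightarrow> 'v) \<Rightarrow> 'v set" where
  "verts E src tgt = src ` E \<union> tgt ` E"

text \<open>Two-terminal series-parallel networks with origin Or and destination De
  (concrete copies; identification of terminals is expressed through shared vertex labels,
  all other vertices and all edges of the two parts being disjoint).\<close>
inductive series_parallel :: "('e \<Rightarrow> 'v) \<Rightarrow> ('e \<Rightarrow> 'v) \<Rightarrow> 'e set \<Rightarrow> 'v \<Rightarrow> 'v \<Rightarrow> bool"
  for src tgt where
  sp_edge: "src e = Or \<Longrightarrow> tgt e = De \<Longrightarrow> Or \<noteq> De \<Longrightarrow> series_parallel src tgt {e} Or De"
| sp_series: "series_parallel src tgt E1 Or M \<Longrightarrow> series_parallel src tgt E2 M De \<Longrightarrow>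
    E1 \<inter> E2 = {} \<Longrightarrow> verts E1 src tgt \<inter> verts E2 src tgt = {M} \<Longrightarrow>
    series_parallel src tgt (E1 \<union> E2) Or De"
| sp_parallel: "series_parallel src tgt E1 Or De \<Longrightarrow> series_parallel src tgt E2 Or De \<Longrightarrow>
    E1 \<inter> E2 = {} \<Longrightarrow> verts E1 src tgt \<inter> verts E2 src tgt = {Or, De} \<Longrightarrow>
    series_parallel src tgt (E1 \<union> E2) Or De"

definition is_path :: "'e set \<Rightarrow> ('e \<Rightarrow> 'v) \<Rightarrow> ('e \<Rightarrow> 'v) \<Rightarrow> 'v \<Rightarrow> 'v \<Rightarrow> 'e list \<Rightarrow> bool" where
  "is_path E src tgt Or De p \<longleftrightarrow> p \<noteq> [] \<and> set p \<subseteq> E \<and> src (hd p) = Or \<and> tgt (last p) = De \<and>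
     (\<forall>i. Suc i < length p \<longrightarrow> tgt (p ! i) = src (p ! Suc i)) \<and>
     distinct (Or # map tgt p)"

text \<open>Common-OD constrained routing game: all commodities route on paths from Or to De;
  as a congestion game its resources are the edges and a path's resource set is its edge set.\<close>
definition common_OD_routing_game ::
  "'e set \<Rightarrow> ('e \<Rightarrow> 'v) \<Rightarrow> ('e \<Rightarrow> 'v) \<Rightarrow> ('e \<Rightarrow> real \<Rightarrow> real) \<Rightarrow> 'v \<Rightarrow> 'v \<Rightarrow> 'h set \<Rightarrow> ('h \<Rightarrow> 'e list set) \<Rightarrow> bool" where
  "common_OD_routing_game E src tgt c Or De H P \<longleftrightarrow>
     finite E \<and> finite H \<and> (\<forall>e\<in>E. admissible_cost (c e)) \<and>
     (\<forall>h\<in>H. P h \<noteq> {} \<and> (\<forall>p\<in>P h. is_path E src tgt Or De p))"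

end

theory Submission
  imports Defs
begin

definition spath :: "(nat \<Rightarrow> 'r) \<Rightarrow> nat \<Rightarrow> 'r set \<Rightarrow> nat list" where
 "spath rr n s = map (\<lambda>i. if rr i \<in> s then 2*i else 2*i+1) [0..<n] @ [2*n]"

lemma set_spath: "set (spath rr n s) = (\<lambda>i. if rr i \<in> s then 2*i else 2*i+1) ` {0..<n} \<union> {2*n}"
  by (auto simp: spath_def)

lemma length_spath: "length (spath rr n s) = Suc n"
  by (simp add: spath_def)

lemma nth_spath: "i < Suc n \<Longrightarrow> spath rr n s ! i div 2 = i"
  by (cases "i < n") (auto simp: spath_def nth_append)

lemma path_spath: "is_path {0..2*n} (\<lambda>e. e div 2) (\<lambda>e. e div 2 + 1) 0 (Suc n) (spath rr n s)"
proof -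
  let ?p = "spath rr n s"
  have ne: "?p \<noteq> []" by (simp add: spath_def)
  have hd: "hd ?p = ?p ! 0" using ne by (simp add: hd_conv_nth)
  have last: "last ?p = 2*n" by (simp add: spath_def)
  have mt: "map (\<lambda>e. e div 2 + 1) ?p = map Suc [0..<Suc n]"
  proof (rule nth_equalityI)
    fix i assume "i < length (map (\<lambda>e. e div 2 + 1) ?p)"
    then have "i < Suc n" by (simp add: length_spath)
    then show "map (\<lambda>e. e div 2 + 1) ?p ! i = map Suc [0..<Suc n] ! i"
      using nth_spath[of i n rr s] by (simp add: length_spath del: upt_Suc)
  qed (simp add: length_spath)
  show ?thesis unfolding is_path_def
    using ne hd last mt nth_spath[of 0 n rr s] nth_spath[of _ n rr s]
    by (auto simp: set_spath length_spath distinct_map)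
qed

lemma verts_single: "verts {e} (\<lambda>e. e div 2) (\<lambda>e. e div 2 + 1) = {e div 2, Suc (e div 2)}"
  by (auto simp: verts_def)

lemma sp_chain: "k \<le> n \<Longrightarrow> series_parallel (\<lambda>e::nat. e div 2) (\<lambda>e. e div 2 + 1) {2*k..2*n} k (Suc n)"
proof (induction "n - k" arbitrary: k)
  case 0
  then have "k = n" by simp
  then show ?case using series_parallel.sp_edge[of "\<lambda>e::nat. e div 2" "2*n" n "\<lambda>e. e div 2 + 1" "Suc n"] by simp
next
  case (Suc d)
  then have kn: "k < n" and IH: "series_parallel (\<lambda>e::nat. e div 2) (\<lambda>e. e div 2 + 1) {2*Suc k..2*n} (Suc k) (Suc n)"
    using Suc.prems Suc.hyps(2) Suc.hyps(1)[of "Suc k"] by auto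
  have g1: "series_parallel (\<lambda>e::nat. e div 2) (\<lambda>e. e div 2 + 1) {2*k} k (Suc k)"
    by (rule series_parallel.sp_edge) auto
  have g2: "series_parallel (\<lambda>e::nat. e div 2) (\<lambda>e. e div 2 + 1) {2*k+1} k (Suc k)"
    by (rule series_parallel.sp_edge) auto
  have g: "series_parallel (\<lambda>e::nat. e div 2) (\<lambda>e. e div 2 + 1) ({2*k} \<union> {2*k+1}) k (Suc k)"
    by (rule series_parallel.sp_parallel[OF g1 g2]) (auto simp: verts_def)
  have vg: "verts ({2*k} \<union> {2*k+1}) (\<lambda>e::nat. e div 2) (\<lambda>e. e div 2 + 1) = {k, Suc k}"
    by (auto simp: verts_def)
  have vr: "verts {2*Suc k..2*n} (\<lambda>e::nat. e div 2) (\<lambda>e. e div 2 + 1) \<inter> {k, Suc k} = {Suc k}"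
  proof -
    have "Suc k \<in> (\<lambda>e::nat. e div 2) ` {2*Suc k..2*n}"
      using kn by (intro image_eqI[of _ _ "2*Suc k"]) auto
    moreover have "k \<notin> verts {2*Suc k..2*n} (\<lambda>e::nat. e div 2) (\<lambda>e. e div 2 + 1)"
      by (auto simp: verts_def)
    ultimately show ?thesis by (auto simp: verts_def)
  qed
  have "series_parallel (\<lambda>e::nat. e div 2) (\<lambda>e. e div 2 + 1) (({2*k} \<union> {2*k+1}) \<union> {2*Suc k..2*n}) k (Suc n)"
    by (rule series_parallel.sp_series[OF g IH]) (use vg vr in auto)
  moreover have "({2*k} \<union> {2*k+1}) \<union> {2*Suc k..2*n} = {2*k..2*n}" using kn by auto
  ultimately show ?case by simp
qed


lemma mem_spath: "i < n \<Longrightarrow> 2*i \<in> set (spath rr n s) \<longleftrightarrow> rr i \<in> s"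
proof -
  assume i: "i < n"
  have "2*i \<in> set (spath rr n s) \<longleftrightarrow> (\<exists>j\<in>{0..<n}. 2*i = (if rr j \<in> s then 2*j else 2*j+1))"
    using i by (auto simp: set_spath)
  also have "\<dots> \<longleftrightarrow> rr i \<in> s"
  proof
    assume "\<exists>j\<in>{0..<n}. 2*i = (if rr j \<in> s then 2*j else 2*j+1)"
    then obtain j where j: "2*i = (if rr j \<in> s then 2*j else 2*j+1)" by blast
    show "rr i \<in> s"
    proof (cases "rr j \<in> s")
      case True then show ?thesis using j by simp
    next
      case False then have "2*i = 2*j+1" using j by simp
      then have False by presburger
      then show ?thesis ..
    qed
  next
    assume "rr i \<in> s" then show "\<exists>j\<in>{0..<n}. 2*i = (if rr j \<in> s then 2*j else 2*j+1)"
      using i by (intro bexI[of _ i]) auto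
  qed
  finally show ?thesis .
qed

lemma inj_spath:
  assumes "bij_betw rr {0..<n} R"
  shows "inj_on (spath rr n) {s. s \<subseteq> R}"
proof (rule inj_onI)
  fix s s' assume s: "s \<in> {s. s \<subseteq> R}" and s': "s' \<in> {s. s \<subseteq> R}" and eq: "spath rr n s = spath rr n s'"
  have "\<And>i. i < n \<Longrightarrow> rr i \<in> s \<longleftrightarrow> rr i \<in> s'"
    using mem_spath[of _ n rr s] mem_spath[of _ n rr s'] eq by metis
  moreover have "R = rr ` {0..<n}" using assms by (simp add: bij_betw_def)
  ultimately show "s = s'" using s s' by auto
qed

lemma zero_adm: "admissible_cost (\<lambda>_. 0)"
  by (auto simp: admissible_cost_def mono_on_def)

theorem proposition5p1:
  fixes R :: "'r set" and c :: "'r \<Rightarrow> real \<Rightarrow> real" and H :: "'h set" and S :: "'h \<Rightarrow> 'r set set"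
  assumes "congestion_game_structure R c H S"
  shows "\<exists>(E :: nat set) (src :: nat \<Rightarrow> nat) (tgt :: nat \<Rightarrow> nat) (Or :: nat) (De :: nat)
            (ce :: nat \<Rightarrow> real \<Rightarrow> real) (H' :: 'h set) (P :: 'h \<Rightarrow> nat list set).
           series_parallel src tgt E Or De \<and>
           common_OD_routing_game E src tgt ce Or De H' P \<and>
           equivalent_games H S id c H' P set ce"
proof -
  note cg = assms[unfolded congestion_game_structure_def]
  define n where "n = card R"
  obtain rr where bij: "bij_betw rr {0..<n} R"
    using ex_bij_betw_nat_finite[of R] cg n_def by blast
  have rrR: "\<And>i. i < n \<Longrightarrow> rr i \<in> R" using bij by (auto simp: bij_betw_def)
  have injrr: "inj_on rr {0..<n}" using bij by (simp add: bij_betw_def)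
  have Rimg: "R = rr ` {0..<n}" using bij by (simp add: bij_betw_def)
  define ce where "ce = (\<lambda>e::nat. if even e \<and> e < 2*n then c (rr (e div 2)) else (\<lambda>_. 0))"
  define P where "P = (\<lambda>h. spath rr n ` S h)"
  define sp where "sp = spath rr n"
  have SR: "\<And>h s. h \<in> H \<Longrightarrow> s \<in> S h \<Longrightarrow> s \<subseteq> R" using cg by blast
  have injS: "\<And>h A. h \<in> H \<Longrightarrow> A \<subseteq> S h \<Longrightarrow> inj_on sp A"
    unfolding sp_def by (rule inj_on_subset[OF inj_spath[OF bij]]) (use SR in blast)
  have SP: "series_parallel (\<lambda>e::nat. e div 2) (\<lambda>e. e div 2 + 1) {0..2*n} 0 (Suc n)"
    using sp_chain[of 0 n] by simp
  have OD: "common_OD_routing_game {0..2*n} (\<lambda>e::nat. e div 2) (\<lambda>e. e div 2 + 1) ce 0 (Suc n) H P"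
    unfolding common_OD_routing_game_def
  proof (intro conjI ballI)
    show "finite H" using cg by blast
    fix e assume "e \<in> {0..2*n}"
    show "admissible_cost (ce e)"
      using cg rrR zero_adm by (auto simp: ce_def)
  next
    fix h assume h: "h \<in> H"
    show "P h \<noteq> {}" using cg h by (auto simp: P_def)
    show "is_path {0..2 * n} (\<lambda>e. e div 2) (\<lambda>e. e div 2 + 1) 0 (Suc n) p" if "p \<in> P h" for p
      using that path_spath by (auto simp: P_def)
  qed simp
  have EQ: "equivalent_games H S id c H P set ce"
    unfolding equivalent_games_def
  proof (intro exI[of _ id] exI[of _ "\<lambda>_. sp"] conjI ballI allI impI)
    show "bij_betw id H H" by simp
    fix h assume h: "h \<in> H"
    show "bij_betw sp (S h) (P (id h))"
      using injS[OF h order_refl] by (simp add: P_def sp_def bij_betw_def)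
  next
    fix \<mu> f g
    assume feas: "feasible_flow H S \<mu> f" and gf: "\<forall>h\<in>H. \<forall>s\<in>S h. g (id h) (sp s) = f h s"
    show "feasible_flow H P (\<lambda>h'. \<mu> (inv_into H id h')) g"
      unfolding feasible_flow_def
    proof (intro ballI conjI)
      fix h assume h: "h \<in> H"
      show "0 \<le> g h p" if "p \<in> P h" for p using that feas gf h by (auto simp: feasible_flow_def P_def sp_def)
      have "sum (g h) (P h) = sum (g h \<circ> sp) (S h)"
        unfolding P_def sp_def[symmetric] by (rule sum.reindex[OF injS[OF h order_refl]])
      also have "\<dots> = sum (f h) (S h)" using gf h by (auto intro: sum.cong)
      also have "\<dots> = \<mu> h" using feas h by (simp add: feasible_flow_def)
      also have "\<dots> = \<mu> (inv_into H id h)" using h by (simp add: inv_into_f_f)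
      finally show "sum (g h) (P h) = \<mu> (inv_into H id h)" .
    qed
    have LL: "load H P set g (2*i) = load H S id f (rr i)" if i: "i < n" for i
      unfolding load_def
    proof (rule sum.cong[OF refl])
      fix h assume h: "h \<in> H"
      have set_eq: "{p \<in> P h. 2*i \<in> set p} = sp ` {s \<in> S h. rr i \<in> id s}"
        using mem_spath[OF i, of rr] by (auto simp: P_def sp_def)
      have "(\<Sum>p\<in>{p \<in> P h. 2*i \<in> set p}. g h p) = (\<Sum>s\<in>{s \<in> S h. rr i \<in> id s}. g h (sp s))"
        unfolding set_eq by (rule sum.reindex_cong[OF injS[OF h, of "{s \<in> S h. rr i \<in> id s}"]]) auto
      also have "\<dots> = (\<Sum>s\<in>{s \<in> S h. rr i \<in> id s}. f h s)" using gf h by (auto intro: sum.cong)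
      finally show "(\<Sum>p\<in>{p \<in> P h. 2*i \<in> set p}. g h p) = (\<Sum>s\<in>{s \<in> S h. rr i \<in> id s}. f h s)" .
    qed
    fix h s assume h: "h \<in> H" and s: "s \<in> S h"
    have sR: "s \<subseteq> R" using SR h s .
    let ?I = "{i \<in> {0..<n}. rr i \<in> s}"
    have fin: "finite (set (sp s))" by simp
    have sub: "(\<lambda>i. 2*i) ` ?I = {e \<in> set (sp s). even e \<and> e < 2*n}"
    proof
      show "(\<lambda>i. 2*i) ` ?I \<subseteq> {e \<in> set (sp s). even e \<and> e < 2*n}"
        using mem_spath[of _ n rr s] by (auto simp: sp_def)
      show "{e \<in> set (sp s). even e \<and> e < 2*n} \<subseteq> (\<lambda>i. 2*i) ` ?I"
      proof
        fix e assume e: "e \<in> {e \<in> set (sp s). even e \<and> e < 2*n}"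
        then obtain i where ei: "e = 2*i" by (auto elim: evenE)
        with e have "i < n" by simp
        with e ei mem_spath[of i n rr s] show "e \<in> (\<lambda>i. 2*i) ` ?I" by (auto simp: sp_def)
      qed
    qed
    have "strategy_cost H P set ce g (sp s) = (\<Sum>e\<in>{e \<in> set (sp s). even e \<and> e < 2*n}. ce e (load H P set g e))"
      unfolding strategy_cost_def
      by (rule sum.mono_neutral_right) (auto simp: ce_def)
    also have "\<dots> = (\<Sum>i\<in>?I. ce (2*i) (load H P set g (2*i)))"
      unfolding sub[symmetric] by (rule sum.reindex_cong[of "\<lambda>i. 2*i"]) (auto simp: inj_on_def)
    also have "\<dots> = (\<Sum>i\<in>?I. c (rr i) (load H S id f (rr i)))"
      by (rule sum.cong) (auto simp: ce_def LL)
    also have "\<dots> = (\<Sum>r\<in>s. c r (load H S id f r))"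
    proof -
      have "rr ` ?I = s" using sR Rimg by auto
      moreover have "inj_on rr ?I" using injrr by (rule inj_on_subset) auto
      ultimately show ?thesis by (metis (no_types, lifting) sum.reindex_cong)
    qed
    finally show "strategy_cost H P set ce g (sp s) = strategy_cost H S id c f s"
      by (simp add: strategy_cost_def)
  qed
  show ?thesis using SP OD EQ by blast
qed

end
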